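(* Let $\mathcal{S}=(Q,E,\delta,Q_0,\Sigma,\ell)$ be a labeled finite-state automaton, $Q_S\subset Q$ a set of secret states, and $K$ a positive integer. Then $\mathcal{S}$ is strongly $K$-step opaque with respect to $Q_S$ if and only if for every state $(q,x)$ reachable in the concurrent composition $\mathrm{CC}(\mathcal{S}_{\varepsilon},\mathcal{S}_{\mathrm{dss\,obs}}^{\varepsilon})$ with $q\in Q_S$, one has $x\neq\emptyset$, and for every run $(q,x)\xrightarrow{s'}(q',x')$ in $\mathrm{CC}(\mathcal{S}_{\varepsilon},\mathcal{S}_{\mathrm{dss\,obs}}^{\varepsilon})$ with $|\ell(s')|\le K$, one has $x'\neq\emptyset$.
   Context: A labeled finite-state automaton (LFSA) is $\mathcal{S}=(Q,E,\delta,Q_0,\Sigma,\ell)$ with finite state set $Q$, finite event alphabet $E$, transition relation $\delta\subset Q\times E\times Q$, initial states $Q_0\subset Q$, finite output alphabet $\Sigma$, and labeling $\ell:E\to\Sigma\cup\{\epsilon\}$ ($\epsilon$ the empty word). $E_o=\{e:\ell(e)\in\Sigma\}$, $E_{uo}=\{e:\ell(e)=\epsilon\}$. Runs $q\xrightarrow{s}q'$ for event words $s$ are defined by chaining transitions (empty word: $q=q'$); $\ell$ extends morphically to words. For $x\subset Q$, $\mathrm{UR}(x)=\{q':\exists q\in x, s\in E_{uo}^*, q\xrightarrow{s}q'\}$. A state is reachable in an automaton if it is initial or is reached by a nonempty run from an initial state. A run is non-secret if none of its states (including first and last) lies in $Q_S$. Strong $K$-step opacity: $\mathcal{S}$ is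 strongly $K$-step opaque w.r.t. $Q_S$ if for every run $q_0\xrightarrow{s_1}q_1\xrightarrow{s_2}q_2$ with $q_0\in Q_0$, $q_1\in Q_S$, $|\ell(s_2)|\le K$, there is a non-secret run $q_0'\xrightarrow{s_1'}q_1'\xrightarrow{s_2'}q_2'$ with $q_0'\in Q_0$, $\ell(s_1)=\ell(s_1')$, $\ell(s_2)=\ell(s_2')$. Concurrent composition: for LFSAs $\mathcal{S}^i=(Q_i,E,\delta_i,Q_{0i},\Sigma,\ell)$, $i=1,2$, $\mathrm{CC}(\mathcal{S}^1,\mathcal{S}^2)$ has states $Q_1\times Q_2$, initial states $Q_{01}\times Q_{02}$, events $\{(e,e'):e,e'\in E_o,\ell(e)=\ell(e')\}\cup\{(e,\epsilon):e\in E_{uo}\}\cup\{(\epsilon,e):e\in E_{uo}\}$, transitions $((q_1,q_1'),(e,e'),(q_2,q_2'))$ iff $(q_1,e,q_2)\in\delta_1,(q_1',e',q_2')\in\delta_2$; $((q_1,q_1'),(e,\epsilon),(q_2,q_1'))$ iff $(q_1,e,q_2)\in\delta_1$; $((q_1,q_1'),(\epsilon,e),(q_1,q_2'))$ iff $(q_1',e,q_2')\in\delta_2$. The label of $(e,e')$ is $\ell(e)$; of $(e,\epsilon),(\epsilon,e)$ it is $\epsilon$; $\ell(s')$ of a word $s'$ of composed events is the concatenation of labels. $\mathcal{S}_{\varepsilon}$: LFSA with states $Q$, initial states $Q_0$, events $\ell(E_o)\cup\{\varepsilon\}$ ($\varepsilon$ a fresh symbol), transition $(q,\ell(e),q')$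 for each $(q,e,q')\in\delta$ with $e\in E_o$ and $(q,\varepsilon,q')$ for each $(q,e,q')\in\delta$ with $e\in E_{uo}$; labeling $\ell'$ = identity on $\ell(E_o)$, $\ell'(\varepsilon)=\epsilon$. $\mathcal{S}_{\mathrm{dss}}$: the accessible part (states reachable from initial states) of the LFSA obtained from $\mathcal{S}$ by deleting all states in $Q_S$ and all transitions incident to them (initial states $Q_0\setminus Q_S$). Its observer $\mathcal{S}_{\mathrm{dss\,obs}}$ is the deterministic automaton with states the subsets of the states of $\mathcal{S}_{\mathrm{dss}}$, alphabet the observable labels, initial state the unobservable reach (within $\mathcal{S}_{\mathrm{dss}}$) of its initial states, and $\delta(x,a)$ = set of states reachable in $\mathcal{S}_{\mathrm{dss}}$ from some $q\in x$ by a word $e_as$ with $e_a$ observable, $\ell(e_a)=a$, $s$ unobservable (so $\delta(\emptyset,a)=\emptyset$). $\mathcal{S}_{\mathrm{dss\,obs}}^{\varepsilon}$ is this observer viewed as an LFSA with events $\ell(E_o)\cup\{\varepsilon\}$ (no $\varepsilon$-transitions) and labeling $\ell'$; $\mathrm{CC}(\mathcal{S}_{\varepsilon},\mathcal{S}_{\mathrm{dss\,obs}}^{\varepsilon})$ is formed with events $\ell(E_o)\cup\{\varepsilon\}$ and labeling $\ell'$. *)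

theory Defs
  imports Main
begin

text \<open>Labeled finite-state automata. Events of type 'e, outputs of type 'o.
  The labeling maps an event to None (the empty word) or Some a (a in the output alphabet).\<close>

record ('q,'e,'o) lfsa =
  St   :: "'q set"
  Ev   :: "'e set"
  Tr   :: "('q \<times> 'e \<times> 'q) set"
  Init :: "'q set"
  Out  :: "'o set"
  Lab  :: "'e \<Rightarrow> 'o option"

definition wf_lfsa :: "('q,'e,'o) lfsa \<Rightarrow> bool" where
  "wf_lfsa S \<longleftrightarrow> finite (St S) \<and> finite (Ev S) \<and> finite (Out S) \<and>
     Tr S \<subseteq> St S \<times> Ev S \<times> St S \<and> Init S \<subseteq> St S \<and>
     (\<forall>e\<in>Ev S. Lab S e = None \<or> Lab S e \<in> Some ` Out S)"

definition obs_events :: "('q,'e,'o) lfsa \<Rightarrow> 'e set" where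
  "obs_events S = {e \<in> Ev S. Lab S e \<noteq> None}"

definition uo_events :: "('q,'e,'o) lfsa \<Rightarrow> 'e set" where
  "uo_events S = {e \<in> Ev S. Lab S e = None}"

inductive run :: "('q \<times> 'e \<times> 'q) set \<Rightarrow> 'q \<Rightarrow> 'e list \<Rightarrow> 'q \<Rightarrow> bool" for T where
  run_Nil: "run T q [] q"
| run_Cons: "(q, e, q') \<in> T \<Longrightarrow> run T q' s q'' \<Longrightarrow> run T q (e # s) q''"

inductive avoid_run :: "('q \<times> 'e \<times> 'q) set \<Rightarrow> 'q set \<Rightarrow> 'q \<Rightarrow> 'e list \<Rightarrow> 'q \<Rightarrow> bool"
  for T A where
  avoid_Nil: "q \<notin> A \<Longrightarrow> avoid_run T A q [] q"
| avoid_Cons: "q \<notin> A \<Longrightarrow> (q, e, q') \<in> T \<Longrightarrow> avoid_run T A q' s q'' \<Longrightarrow> avoid_run T A q (e # s) q''"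

definition labw :: "('e \<Rightarrow> 'o option) \<Rightarrow> 'e list \<Rightarrow> 'o list" where
  "labw l s = concat (map (\<lambda>e. case l e of None \<Rightarrow> [] | Some a \<Rightarrow> [a]) s)"

definition strongly_K_step_opaque :: "('q,'e,'o) lfsa \<Rightarrow> 'q set \<Rightarrow> nat \<Rightarrow> bool" where
  "strongly_K_step_opaque S QS K \<longleftrightarrow>
    (\<forall>q0 s1 q1 s2 q2. q0 \<in> Init S \<and> run (Tr S) q0 s1 q1 \<and> q1 \<in> QS \<and> run (Tr S) q1 s2 q2 \<and>
        length (labw (Lab S) s2) \<le> K \<longrightarrow>
      (\<exists>q0' s1' q1' s2' q2'. q0' \<in> Init S \<and> avoid_run (Tr S) QS q0' s1' q1' \<and>
          avoid_run (Tr S) QS q1' s2' q2' \<and>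
          labw (Lab S) s1 = labw (Lab S) s1' \<and> labw (Lab S) s2 = labw (Lab S) s2'))"

definition UR :: "('q \<times> 'e \<times> 'q) set \<Rightarrow> ('e \<Rightarrow> 'o option) \<Rightarrow> 'q set \<Rightarrow> 'q set" where
  "UR T l x = {q'. \<exists>q\<in>x. \<exists>s. (\<forall>e\<in>set s. l e = None) \<and> run T q s q'}"

definition reachable :: "('q,'e,'o) lfsa \<Rightarrow> 'q \<Rightarrow> bool" where
  "reachable S q \<longleftrightarrow> q \<in> Init S \<or> (\<exists>q0\<in>Init S. \<exists>s. s \<noteq> [] \<and> run (Tr S) q0 s q)"

text \<open>S_epsilon: events are observable labels (Some a) plus the fresh symbol epsilon (None);
  labeling is the identity (epsilon is mapped to the empty word None).\<close>
definition S_eps :: "('q,'e,'o) lfsa \<Rightarrow> ('q,'o option,'o) lfsa" where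
  "S_eps S = \<lparr> St = St S, Ev = Lab S ` obs_events S \<union> {None},
     Tr = {(q, Lab S e, q') | q e q'. (q, e, q') \<in> Tr S},
     Init = Init S, Out = Out S, Lab = id \<rparr>"

definition dss_states :: "('q,'e,'o) lfsa \<Rightarrow> 'q set \<Rightarrow> 'q set" where
  "dss_states S QS = {q. \<exists>q0 \<in> Init S - QS. \<exists>s.
     run {(p, e, p') \<in> Tr S. p \<notin> QS \<and> p' \<notin> QS} q0 s q}"

definition dss :: "('q,'e,'o) lfsa \<Rightarrow> 'q set \<Rightarrow> ('q,'e,'o) lfsa" where
  "dss S QS = \<lparr> St = dss_states S QS, Ev = Ev S,
     Tr = {(q, e, q') \<in> Tr S. q \<in> dss_states S QS \<and> q' \<in> dss_states S QS},
     Init = Init S - QS, Out = Out S, Lab = Lab S \<rparr>"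

definition obs_step :: "('q,'e,'o) lfsa \<Rightarrow> 'q set \<Rightarrow> 'o \<Rightarrow> 'q set" where
  "obs_step S x a = {q'. \<exists>q\<in>x. \<exists>e q1. (q, e, q1) \<in> Tr S \<and> Lab S e = Some a \<and>
       q' \<in> UR (Tr S) (Lab S) {q1}}"

definition obs_eps :: "('q,'e,'o) lfsa \<Rightarrow> ('q set,'o option,'o) lfsa" where
  "obs_eps S = \<lparr> St = Pow (St S), Ev = Lab S ` obs_events S \<union> {None},
     Tr = {(x, Some a, obs_step S x a) | x a. x \<subseteq> St S \<and> Some a \<in> Lab S ` obs_events S},
     Init = {UR (Tr S) (Lab S) (Init S)}, Out = Out S, Lab = id \<rparr>"

text \<open>Concurrent composition; composed events are pairs of 'e option, None standing for
  the empty word in the pair notation (e, epsilon), (epsilon, e). Both components share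
  the event set and labeling (taken from the first component).\<close>
definition cc_events :: "('q1,'e,'o) lfsa \<Rightarrow> ('e option \<times> 'e option) set" where
  "cc_events S1 = {(Some e, Some e') | e e'. e \<in> obs_events S1 \<and> e' \<in> obs_events S1 \<and> Lab S1 e = Lab S1 e'}
     \<union> {(Some e, None) | e. e \<in> uo_events S1} \<union> {(None, Some e) | e. e \<in> uo_events S1}"

definition CC :: "('q1,'e,'o) lfsa \<Rightarrow> ('q2,'e,'o) lfsa \<Rightarrow> ('q1 \<times> 'q2, 'e option \<times> 'e option, 'o) lfsa" where
  "CC S1 S2 = \<lparr> St = St S1 \<times> St S2, Ev = cc_events S1,
     Tr = {((q1, q1'), (Some e, Some e'), (q2, q2')) | q1 q1' e e' q2 q2'.
              (Some e, Some e') \<in> cc_events S1 \<and> (q1, e, q2) \<in> Tr S1 \<and> (q1', e', q2') \<in> Tr S2}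
        \<union> {((q1, q1'), (Some e, None), (q2, q1')) | q1 q1' e q2.
              e \<in> uo_events S1 \<and> (q1, e, q2) \<in> Tr S1}
        \<union> {((q1, q1'), (None, Some e), (q1, q2')) | q1 q1' e q2'.
              e \<in> uo_events S1 \<and> (q1', e, q2') \<in> Tr S2},
     Init = Init S1 \<times> Init S2, Out = Out S1,
     Lab = (\<lambda>p. case p of (Some e, Some e') \<Rightarrow> Lab S1 e | _ \<Rightarrow> None) \<rparr>"

definition CC_eps_dssobs :: "('q,'e,'o) lfsa \<Rightarrow> 'q set \<Rightarrow>
    ('q \<times> 'q set, 'o option option \<times> 'o option option, 'o) lfsa" where
  "CC_eps_dssobs S QS = CC (S_eps S) (obs_eps (dss S QS))"

end

theory Submission imports Defs begin

lemma obs_events_dss[simp]: "obs_events (dss S QS) = obs_events S"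
  by (simp add: obs_events_def dss_def)
lemma dss_simps[simp]: "St (dss S QS) = dss_states S QS" "Lab (dss S QS) = Lab S"
  "Init (dss S QS) = Init S - QS"
  by (simp_all add: dss_def)
lemma Tr_dss: "Tr (dss S QS) = {(q, e, q') \<in> Tr S. q \<in> dss_states S QS \<and> q' \<in> dss_states S QS}"
  by (simp_all add: dss_def)

lemma Tr_S_eps: "(q, a, q2) \<in> Tr (S_eps S) \<longleftrightarrow> (\<exists>e. (q,e,q2) \<in> Tr S \<and> Lab S e = a)"
  by (auto simp: S_eps_def)
lemma Tr_obs: "(x, b, x2) \<in> Tr (obs_eps D) \<longleftrightarrow> (\<exists>a. b = Some a \<and> x \<subseteq> St D \<and> Some a \<in> Lab D ` obs_events D \<and> x2 = obs_step D x a)"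
  by (auto simp: obs_eps_def)
lemma obs_events_S_eps: "obs_events (S_eps S) = Lab S ` obs_events S"
  by (auto simp: obs_events_def S_eps_def)
lemma uo_events_S_eps: "uo_events (S_eps S) = {None}"
  by (auto simp: uo_events_def S_eps_def)
lemma Lab_S_eps[simp]: "Lab (S_eps S) = id" by (simp add: S_eps_def)

lemma TrC: "((q,x), ev, (q2,x2)) \<in> Tr (CC_eps_dssobs S QS) \<longleftrightarrow>
  (\<exists>a e. ev = (Some (Some a), Some (Some a)) \<and> (q,e,q2) \<in> Tr S \<and> Lab S e = Some a \<and>
     x \<subseteq> dss_states S QS \<and> Some a \<in> Lab S ` obs_events S \<and> x2 = obs_step (dss S QS) x a)
  \<or> (\<exists>e. ev = (Some None, None) \<and> (q,e,q2) \<in> Tr S \<and> Lab S e = None \<and> x2 = x)"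
  unfolding CC_eps_dssobs_def CC_def cc_events_def 
  apply (simp add: Tr_S_eps Tr_obs obs_events_S_eps uo_events_S_eps)
  apply (simp add: obs_events_def)
  apply (rule iffI)
   apply (elim disjE exE conjE)
    apply simp apply blast
   apply simp apply blast
  apply (elim disjE exE conjE)
   apply (rule disjI1) apply (rule exI[where x="Some a" for a]) apply simp apply blast
  apply simp apply blast
  done

lemma LabC: "Lab (CC_eps_dssobs S QS) (Some (Some a), Some (Some a)) = Some a"
  "Lab (CC_eps_dssobs S QS) (Some None, None) = None"
  by (auto simp: CC_eps_dssobs_def CC_def S_eps_def)

lemma InitC: "Init (CC_eps_dssobs S QS) = Init S \<times> {UR (Tr (dss S QS)) (Lab S) (Init S - QS)}"
  by (simp add: CC_eps_dssobs_def CC_def S_eps_def obs_eps_def)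

lemma labw_Nil[simp]: "labw l [] = []" by (simp add: labw_def)
lemma labw_Cons[simp]: "labw l (e # s) = (case l e of None \<Rightarrow> [] | Some a \<Rightarrow> [a]) @ labw l s"
  by (simp add: labw_def)
lemma labw_append[simp]: "labw l (s @ t) = labw l s @ labw l t" by (simp add: labw_def)
lemma labw_Nil_iff: "labw l s = [] \<longleftrightarrow> (\<forall>e\<in>set s. l e = None)"
  by (induction s) (auto split: option.split)

lemma labw_split: "labw l s = w @ v \<Longrightarrow> \<exists>s1 s2. s = s1 @ s2 \<and> labw l s1 = w \<and> labw l s2 = v"
proof (induction s arbitrary: w)
  case Nil then show ?case by simp
next
  case (Cons e t)
  show ?case
  proof (cases "l e")
    case None
    with Cons.prems have "labw l t = w @ v" by simp
    from Cons.IH[OF this] obtain s1 s2 where "t = s1 @ s2" "labw l s1 = w" "labw l s2 = v" by blast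
    then show ?thesis using None by (intro exI[of _ "e # s1"] exI[of _ s2]) simp
  next
    case (Some a)
    show ?thesis
    proof (cases w)
      case Nil
      then show ?thesis using Cons.prems by (intro exI[of _ "[]"] exI[of _ "e # t"]) simp
    next
      case (Cons b w')
      with Cons.prems Some have "labw l t = w' @ v" "a = b" by simp_all
      from Cons.IH[OF this(1)] obtain s1 s2 where "t = s1 @ s2" "labw l s1 = w'" "labw l s2 = v" by blast
      then show ?thesis using Some \<open>a = b\<close> Cons by (intro exI[of _ "e # s1"] exI[of _ s2]) simp
    qed
  qed
qed

lemma labw_single: "labw l s = [a] \<Longrightarrow> \<exists>u1 e u2. s = u1 @ e # u2 \<and> labw l u1 = [] \<and> l e = Some a \<and> labw l u2 = []"
proof (induction s)
  case Nil then show ?case by simp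
next
  case (Cons e t)
  show ?case
  proof (cases "l e")
    case None
    with Cons.prems have "labw l t = [a]" by simp
    from Cons.IH[OF this] obtain u1 e' u2 where "t = u1 @ e' # u2" "labw l u1 = []" "l e' = Some a" "labw l u2 = []" by blast
    then show ?thesis using None by (intro exI[of _ "e # u1"] exI[of _ e'] exI[of _ u2]) simp
  next
    case (Some b)
    with Cons.prems have "b = a" "labw l t = []" by simp_all
    then show ?thesis using Some by (intro exI[of _ "[]"] exI[of _ e] exI[of _ t]) simp
  qed
qed

lemma labw_snoc_split: "labw l s = w @ [a] \<Longrightarrow> \<exists>s1 e s2. s = s1 @ e # s2 \<and> labw l s1 = w \<and> l e = Some a \<and> labw l s2 = []"
proof -
  assume "labw l s = w @ [a]"
  from labw_split[OF this] obtain s1 s2 where "s = s1 @ s2" "labw l s1 = w" "labw l s2 = [a]" by blast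
  from labw_single[OF this(3)] obtain u1 e u2 where "s2 = u1 @ e # u2" "labw l u1 = []" "l e = Some a" "labw l u2 = []" by blast
  then show ?thesis using \<open>s = s1 @ s2\<close> \<open>labw l s1 = w\<close>
    by (intro exI[of _ "s1 @ u1"] exI[of _ e] exI[of _ u2]) simp
qed

lemma run_append: "run T q s q1 \<Longrightarrow> run T q1 t q2 \<Longrightarrow> run T q (s @ t) q2"
  by (induction rule: run.induct) (auto intro: run.intros)
lemma run_split: "run T q (s @ t) q2 \<Longrightarrow> \<exists>q1. run T q s q1 \<and> run T q1 t q2"
proof (induction s arbitrary: q)
  case Nil then show ?case by (auto intro: run.intros)
next
  case (Cons e s)
  from Cons.prems obtain q' where "(q, e, q') \<in> T" "run T q' (s @ t) q2"
    by (auto elim: run.cases)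
  moreover from Cons.IH[OF this(2)] obtain q1 where "run T q' s q1" "run T q1 t q2" by blast
  ultimately show ?case by (meson run.intros)
qed
lemma avoid_first: "avoid_run T A q s q' \<Longrightarrow> q \<notin> A"
  by (auto elim: avoid_run.cases)
lemma avoid_last: "avoid_run T A q s q' \<Longrightarrow> q' \<notin> A"
  by (induction rule: avoid_run.induct) auto
lemma avoid_append: "avoid_run T A q s q1 \<Longrightarrow> avoid_run T A q1 t q2 \<Longrightarrow> avoid_run T A q (s @ t) q2"
  by (induction rule: avoid_run.induct) (auto intro: avoid_run.intros)
lemma avoid_split: "avoid_run T A q (s @ t) q2 \<Longrightarrow> \<exists>q1. avoid_run T A q s q1 \<and> avoid_run T A q1 t q2"
proof (induction s arbitrary: q)
  case Nil then show ?case by (auto intro: avoid_run.intros dest: avoid_first)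
next
  case (Cons e s)
  from Cons.prems obtain q' where "q \<notin> A" "(q, e, q') \<in> T" "avoid_run T A q' (s @ t) q2"
    by (auto elim: avoid_run.cases)
  moreover from Cons.IH[OF this(3)] obtain q1 where "avoid_run T A q' s q1" "avoid_run T A q1 t q2" by blast
  ultimately show ?case by (meson avoid_run.intros)
qed

lemma dss_notQS: "q \<in> dss_states S QS \<Longrightarrow> q \<notin> QS"
proof -
  have "run {(p, e, p') \<in> Tr S. p \<notin> QS \<and> p' \<notin> QS} p s q \<Longrightarrow> p \<notin> QS \<Longrightarrow> q \<notin> QS" for p s
    by (induction rule: run.induct) auto
  then show "q \<in> dss_states S QS \<Longrightarrow> q \<notin> QS" unfolding dss_states_def by blast
qed
lemma dss_init: "q \<in> Init S \<Longrightarrow> q \<notin> QS \<Longrightarrow> q \<in> dss_states S QS"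
  unfolding dss_states_def by (auto intro: run.intros)
lemma X1: "q \<in> dss_states S QS \<Longrightarrow> \<exists>q0 s. q0 \<in> Init S - QS \<and> run {(p, e, p') \<in> Tr S. p \<notin> QS \<and> p' \<notin> QS} q0 s q"
  unfolding dss_states_def by (elim CollectE bexE exE) (intro exI conjI)
lemma X2: "q0 \<in> Init S - QS \<Longrightarrow> run {(p, e, p') \<in> Tr S. p \<notin> QS \<and> p' \<notin> QS} q0 s q \<Longrightarrow> q \<in> dss_states S QS"
  unfolding dss_states_def by (intro CollectI bexI exI)
lemma X3: "(q, e, q2) \<in> Tr S \<Longrightarrow> q \<notin> QS \<Longrightarrow> q2 \<notin> QS \<Longrightarrow> run {(p, e, p') \<in> Tr S. p \<notin> QS \<and> p' \<notin> QS} q [e] q2"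
  by (rule run.intros(2)) (auto intro: run.intros(1))
lemma dss_step: "q \<in> dss_states S QS \<Longrightarrow> (q, e, q2) \<in> Tr S \<Longrightarrow> q2 \<notin> QS \<Longrightarrow> q2 \<in> dss_states S QS"
proof -
  assume a: "q \<in> dss_states S QS" "(q, e, q2) \<in> Tr S" "q2 \<notin> QS"
  have nq: "q \<notin> QS" using a(1) by (rule dss_notQS)
  from X1[OF a(1)] obtain q0 s where h1: "q0 \<in> Init S - QS" and h2: "run {(p, e, p') \<in> Tr S. p \<notin> QS \<and> p' \<notin> QS} q0 s q"
    by blast
  have h3: "run {(p, e, p') \<in> Tr S. p \<notin> QS \<and> p' \<notin> QS} q [e] q2" using a(2) nq a(3) by (rule X3)
  have "run {(p, e, p') \<in> Tr S. p \<notin> QS \<and> p' \<notin> QS} q0 (s @ [e]) q2" using h2 h3 by (rule run_append)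
  with h1 show ?thesis by (rule X2)
qed
lemma run_dss_avoid: "run (Tr (dss S QS)) q s q' \<Longrightarrow> q \<in> dss_states S QS \<Longrightarrow> avoid_run (Tr S) QS q s q'"
proof (induction rule: run.induct)
  case (run_Nil q) then show ?case using dss_notQS avoid_run.intros(1) by metis
next
  case (run_Cons q e q' s q'')
  then have "(q, e, q') \<in> Tr S" "q' \<in> dss_states S QS" "q \<notin> QS" by (auto simp: Tr_dss dest: dss_notQS)
  with run_Cons show ?case by (metis avoid_run.intros(2))
qed
lemma run_dss_end: "run (Tr (dss S QS)) q s q' \<Longrightarrow> q \<in> dss_states S QS \<Longrightarrow> q' \<in> dss_states S QS"
proof (induction rule: run.induct)
  case (run_Nil q) then show ?case by simp
next
  case (run_Cons q e q' s q'')
  then have "q' \<in> dss_states S QS" by (simp add: Tr_dss)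
  with run_Cons show ?case by blast
qed
lemma avoid_dss: "avoid_run (Tr S) QS q s q' \<Longrightarrow> q \<in> dss_states S QS \<Longrightarrow> run (Tr (dss S QS)) q s q'"
proof (induction rule: avoid_run.induct)
  case (avoid_Nil q) show ?case by (rule run.intros(1))
next
  case (avoid_Cons q e q1 s q'')
  have n1: "q1 \<notin> QS" using avoid_Cons.hyps(3) by (rule avoid_first)
  have d1: "q1 \<in> dss_states S QS" using avoid_Cons.prems avoid_Cons.hyps(2) n1 by (rule dss_step)
  have t: "(q, e, q1) \<in> Tr (dss S QS)" using avoid_Cons.hyps(2) avoid_Cons.prems d1 by (simp add: Tr_dss)
  have r: "run (Tr (dss S QS)) q1 s q''" using d1 by (rule avoid_Cons.IH)
  show ?case using t r by (rule run.intros(2))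
qed

definition Rch :: "('q,'e,'o) lfsa \<Rightarrow> 'q set \<Rightarrow> 'o list \<Rightarrow> 'q set" where
  "Rch S QS w = {q'. \<exists>q0 \<in> Init S - QS. \<exists>s. run (Tr (dss S QS)) q0 s q' \<and> labw (Lab S) s = w}"

lemma Rch_iff: "q' \<in> Rch S QS w \<longleftrightarrow> (\<exists>q0\<in>Init S. \<exists>s. avoid_run (Tr S) QS q0 s q' \<and> labw (Lab S) s = w)"
proof
  assume "q' \<in> Rch S QS w"
  then obtain q0 s where h: "q0 \<in> Init S - QS" "run (Tr (dss S QS)) q0 s q'" "labw (Lab S) s = w"
    unfolding Rch_def by blast
  have d: "q0 \<in> dss_states S QS" using h(1) by (intro dss_init) auto
  have "avoid_run (Tr S) QS q0 s q'" using h(2) d by (rule run_dss_avoid)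
  then show "\<exists>q0\<in>Init S. \<exists>s. avoid_run (Tr S) QS q0 s q' \<and> labw (Lab S) s = w"
    using h(1,3) by blast
next
  assume "\<exists>q0\<in>Init S. \<exists>s. avoid_run (Tr S) QS q0 s q' \<and> labw (Lab S) s = w"
  then obtain q0 s where h: "q0 \<in> Init S" "avoid_run (Tr S) QS q0 s q'" "labw (Lab S) s = w" by blast
  have n: "q0 \<notin> QS" using h(2) by (rule avoid_first)
  have d: "q0 \<in> dss_states S QS" using h(1) n by (rule dss_init)
  have "run (Tr (dss S QS)) q0 s q'" using h(2) d by (rule avoid_dss)
  then show "q' \<in> Rch S QS w" unfolding Rch_def using h(1,3) n by blast
qed

lemma Rch_sub: "Rch S QS w \<subseteq> dss_states S QS"
proof
  fix q' assume "q' \<in> Rch S QS w"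
  then obtain q0 s where "q0 \<in> Init S - QS" "run (Tr (dss S QS)) q0 s q'" unfolding Rch_def by blast
  then show "q' \<in> dss_states S QS" using run_dss_end dss_init by (metis DiffD1 DiffD2)
qed

lemma Rch_Nil: "UR (Tr (dss S QS)) (Lab S) (Init S - QS) = Rch S QS []"
  unfolding Rch_def UR_def by (auto simp: labw_Nil_iff)

lemma obs_step_Rch: "obs_step (dss S QS) (Rch S QS w) a = Rch S QS (w @ [a])"
proof
  show "obs_step (dss S QS) (Rch S QS w) a \<subseteq> Rch S QS (w @ [a])"
  proof
    fix q' assume "q' \<in> obs_step (dss S QS) (Rch S QS w) a"
    then obtain q e q1 u where "q \<in> Rch S QS w" "(q, e, q1) \<in> Tr (dss S QS)" "Lab S e = Some a"
      "\<forall>e\<in>set u. Lab S e = None" "run (Tr (dss S QS)) q1 u q'"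
      unfolding obs_step_def UR_def by auto
    note h = this
    from h(1) obtain q0 s where q0: "q0 \<in> Init S - QS" "run (Tr (dss S QS)) q0 s q" "labw (Lab S) s = w"
      unfolding Rch_def by blast
    have r1: "run (Tr (dss S QS)) q (e # u) q'" using h(2,5) by (rule run.intros)
    have r: "run (Tr (dss S QS)) q0 (s @ e # u) q'" using q0(2) r1 by (rule run_append)
    have lu: "labw (Lab S) u = []" using h(4) by (simp add: labw_Nil_iff)
    have "labw (Lab S) (s @ e # u) = w @ [a]" using q0(3) h(3) lu by simp
    then show "q' \<in> Rch S QS (w @ [a])" unfolding Rch_def using q0(1) r by blast
  qed
next
  show "Rch S QS (w @ [a]) \<subseteq> obs_step (dss S QS) (Rch S QS w) a"
  proof
    fix q' assume "q' \<in> Rch S QS (w @ [a])"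
    then obtain q0 s where q0: "q0 \<in> Init S - QS" and r: "run (Tr (dss S QS)) q0 s q'" and l: "labw (Lab S) s = w @ [a]"
      unfolding Rch_def by blast
    from labw_snoc_split[OF l] obtain s1 e s2 where s: "s = s1 @ e # s2" "labw (Lab S) s1 = w"
      "Lab S e = Some a" "labw (Lab S) s2 = []" by blast
    from r s(1) have "run (Tr (dss S QS)) q0 (s1 @ (e # s2)) q'" by simp
    then obtain q where r1: "run (Tr (dss S QS)) q0 s1 q" and r2: "run (Tr (dss S QS)) q (e # s2) q'"
      using run_split by metis
    from r2 obtain q1 where t: "(q, e, q1) \<in> Tr (dss S QS)" and r3: "run (Tr (dss S QS)) q1 s2 q'"
      by (auto elim: run.cases)
    have A1: "q \<in> Rch S QS w" unfolding Rch_def using q0 r1 s(2) by blast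
    have u: "\<forall>e\<in>set s2. Lab S e = None" using s(4) by (simp add: labw_Nil_iff)
    have B: "q' \<in> UR (Tr (dss S QS)) (Lab S) {q1}" unfolding UR_def
      using r3 u by auto
    show "q' \<in> obs_step (dss S QS) (Rch S QS w) a"
      unfolding obs_step_def dss_simps(2)
      by (rule CollectI, rule bexI[OF _ A1], intro exI conjI, rule t, rule s(3), rule B)
  qed
qed


lemma lemA: "run (Tr (CC_eps_dssobs S QS)) p s' p' \<Longrightarrow> snd p = Rch S QS w \<Longrightarrow>
  \<exists>s. run (Tr S) (fst p) s (fst p') \<and> labw (Lab S) s = labw (Lab (CC_eps_dssobs S QS)) s'
     \<and> snd p' = Rch S QS (w @ labw (Lab S) s)"
proof (induction arbitrary: w rule: run.induct)
  case (run_Nil q)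
  have "run (Tr S) (fst q) [] (fst q)" by (rule run.intros(1))
  then show ?case using run_Nil by (intro exI[of _ "[]"]) simp
next
  case (run_Cons p ev p1 s' p')
  obtain q x q1 x1 where pp: "p = (q, x)" "p1 = (q1, x1)" by fastforce
  from run_Cons.hyps(1) pp have "((q,x), ev, (q1,x1)) \<in> Tr (CC_eps_dssobs S QS)" by simp
  then show ?case unfolding TrC
  proof (elim disjE exE conjE)
    fix a e assume h: "ev = (Some (Some a), Some (Some a))" "(q, e, q1) \<in> Tr S" "Lab S e = Some a"
      "x1 = obs_step (dss S QS) x a"
    have "x = Rch S QS w" using pp run_Cons.prems by simp
    then have "snd p1 = Rch S QS (w @ [a])" using h(4) pp obs_step_Rch by simp
    from run_Cons.IH[OF this] obtain s where r: "run (Tr S) (fst p1) s (fst p')"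
      and l: "labw (Lab S) s = labw (Lab (CC_eps_dssobs S QS)) s'" and x: "snd p' = Rch S QS ((w @ [a]) @ labw (Lab S) s)"
      by blast
    have r2: "run (Tr S) q (e # s) (fst p')" using h(2) r pp by (simp add: run.intros(2))
    have l2: "labw (Lab S) (e # s) = labw (Lab (CC_eps_dssobs S QS)) (ev # s')"
      using h(1,3) l by (simp add: LabC)
    have x2: "snd p' = Rch S QS (w @ labw (Lab S) (e # s))" using x h(3) by simp
    show ?thesis using r2 l2 x2 pp by (intro exI[of _ "e # s"]) simp
  next
    fix e assume h: "ev = (Some None, None)" "(q, e, q1) \<in> Tr S" "Lab S e = None" "x1 = x"
    have "snd p1 = Rch S QS w" using h(4) pp run_Cons.prems by simp
    from run_Cons.IH[OF this] obtain s where r: "run (Tr S) (fst p1) s (fst p')"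
      and l: "labw (Lab S) s = labw (Lab (CC_eps_dssobs S QS)) s'" and x: "snd p' = Rch S QS (w @ labw (Lab S) s)"
      by blast
    have r2: "run (Tr S) q (e # s) (fst p')" using h(2) r pp by (simp add: run.intros(2))
    have l2: "labw (Lab S) (e # s) = labw (Lab (CC_eps_dssobs S QS)) (ev # s')"
      using h(1,3) l by (simp add: LabC)
    have x2: "snd p' = Rch S QS (w @ labw (Lab S) (e # s))" using x h(3) by simp
    show ?thesis using r2 l2 x2 pp by (intro exI[of _ "e # s"]) simp
  qed
qed

lemma lemB: "run (Tr S) q s q' \<Longrightarrow> wf_lfsa S \<Longrightarrow>
  \<exists>s''. run (Tr (CC_eps_dssobs S QS)) (q, Rch S QS w) s'' (q', Rch S QS (w @ labw (Lab S) s))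
     \<and> labw (Lab (CC_eps_dssobs S QS)) s'' = labw (Lab S) s"
proof (induction arbitrary: w rule: run.induct)
  case (run_Nil q)
  have "run (Tr (CC_eps_dssobs S QS)) (q, Rch S QS w) [] (q, Rch S QS w)" by (rule run.intros(1))
  then show ?case by (intro exI[of _ "[]"]) simp
next
  case (run_Cons q e q1 s q')
  have "Tr S \<subseteq> St S \<times> Ev S \<times> St S" using run_Cons.prems unfolding wf_lfsa_def by blast
  then have eEv: "e \<in> Ev S" using run_Cons.hyps(1) by blast
  show ?case
  proof (cases "Lab S e")
    case None
    from run_Cons.IH[OF run_Cons.prems, of w] obtain s'' where
      r: "run (Tr (CC_eps_dssobs S QS)) (q1, Rch S QS w) s'' (q', Rch S QS (w @ labw (Lab S) s))"
      and l: "labw (Lab (CC_eps_dssobs S QS)) s'' = labw (Lab S) s" by blast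
    have t: "((q, Rch S QS w), (Some None, None), (q1, Rch S QS w)) \<in> Tr (CC_eps_dssobs S QS)"
      unfolding TrC using None run_Cons.hyps(1) by blast
    have r2: "run (Tr (CC_eps_dssobs S QS)) (q, Rch S QS w) ((Some None, None) # s'') (q', Rch S QS (w @ labw (Lab S) (e # s)))"
      using run.intros(2)[OF t r] None by simp
    have l2: "labw (Lab (CC_eps_dssobs S QS)) ((Some None, None) # s'') = labw (Lab S) (e # s)"
      using l None by (simp add: LabC)
    show ?thesis using r2 l2 by blast
  next
    case (Some a)
    from run_Cons.IH[OF run_Cons.prems, of "w @ [a]"] obtain s'' where
      r: "run (Tr (CC_eps_dssobs S QS)) (q1, Rch S QS (w @ [a])) s'' (q', Rch S QS ((w @ [a]) @ labw (Lab S) s))"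
      and l: "labw (Lab (CC_eps_dssobs S QS)) s'' = labw (Lab S) s" by blast
    have "e \<in> obs_events S" using eEv Some unfolding obs_events_def by simp
    then have ia: "Some a \<in> Lab S ` obs_events S" using Some by (metis image_eqI)
    have t: "((q, Rch S QS w), (Some (Some a), Some (Some a)), (q1, Rch S QS (w @ [a]))) \<in> Tr (CC_eps_dssobs S QS)"
      unfolding TrC using Some run_Cons.hyps(1) Rch_sub[of S QS w] obs_step_Rch[of S QS w a] ia by blast
    have r2: "run (Tr (CC_eps_dssobs S QS)) (q, Rch S QS w) ((Some (Some a), Some (Some a)) # s'') (q', Rch S QS (w @ labw (Lab S) (e # s)))"
      using run.intros(2)[OF t r] Some by simp
    have l2: "labw (Lab (CC_eps_dssobs S QS)) ((Some (Some a), Some (Some a)) # s'') = labw (Lab S) (e # s)"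
      using l Some by (simp add: LabC)
    show ?thesis using r2 l2 by blast
  qed
qed


lemma reach_iff: "wf_lfsa S \<Longrightarrow> reachable (CC_eps_dssobs S QS) (q, x) \<longleftrightarrow>
   (\<exists>q0\<in>Init S. \<exists>s. run (Tr S) q0 s q \<and> x = Rch S QS (labw (Lab S) s))"
proof
  assume "reachable (CC_eps_dssobs S QS) (q, x)"
  then consider "(q, x) \<in> Init (CC_eps_dssobs S QS)"
    | p0 s where "p0 \<in> Init (CC_eps_dssobs S QS)" "run (Tr (CC_eps_dssobs S QS)) p0 s (q, x)"
    unfolding reachable_def by blast
  then show "\<exists>q0\<in>Init S. \<exists>s. run (Tr S) q0 s q \<and> x = Rch S QS (labw (Lab S) s)"
  proof cases
    case 1
    then have "q \<in> Init S" "x = Rch S QS []" by (auto simp: InitC Rch_Nil)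
    moreover have "run (Tr S) q [] q" by (rule run.intros(1))
    ultimately show ?thesis by (intro bexI[of _ q] exI[of _ "[]"]) simp_all
  next
    case 2
    then have a: "snd p0 = Rch S QS []" "fst p0 \<in> Init S" by (auto simp: InitC Rch_Nil)
    from lemA[OF 2(2) a(1)] obtain s1 where "run (Tr S) (fst p0) s1 q" "x = Rch S QS (labw (Lab S) s1)"
      by auto
    with a(2) show ?thesis by blast
  qed
next
  assume wf: "wf_lfsa S"
  assume "\<exists>q0\<in>Init S. \<exists>s. run (Tr S) q0 s q \<and> x = Rch S QS (labw (Lab S) s)"
  then obtain q0 s where h: "q0 \<in> Init S" "run (Tr S) q0 s q" "x = Rch S QS (labw (Lab S) s)" by blast
  from lemB[where QS=QS and w="[]", OF h(2) wf] obtain s'' where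
    r0: "run (Tr (CC_eps_dssobs S QS)) (q0, Rch S QS []) s'' (q, Rch S QS ([] @ labw (Lab S) s))" by blast
  have r: "run (Tr (CC_eps_dssobs S QS)) (q0, Rch S QS []) s'' (q, x)" using r0 h(3) by simp
  have i: "(q0, Rch S QS []) \<in> Init (CC_eps_dssobs S QS)" using h(1) by (simp add: InitC Rch_Nil)
  show "reachable (CC_eps_dssobs S QS) (q, x)"
  proof (cases "s'' = []")
    case True
    with r have "(q0, Rch S QS []) = (q, x)" by (auto elim: run.cases)
    with i show ?thesis unfolding reachable_def by simp
  next
    case False
    then show ?thesis unfolding reachable_def using r i by blast
  qed
qed

theorem theorem11:
  fixes S :: "('q,'e,'o) lfsa" and QS :: "'q set" and K :: nat
  assumes "wf_lfsa S" and "QS \<subseteq> St S" and "0 < K"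
  shows "strongly_K_step_opaque S QS K \<longleftrightarrow>
    (\<forall>q x. reachable (CC_eps_dssobs S QS) (q, x) \<and> q \<in> QS \<longrightarrow>
       x \<noteq> {} \<and>
       (\<forall>s' q' x'. run (Tr (CC_eps_dssobs S QS)) (q, x) s' (q', x') \<and>
          length (labw (Lab (CC_eps_dssobs S QS)) s') \<le> K \<longrightarrow> x' \<noteq> {}))"
proof
  assume op: "strongly_K_step_opaque S QS K"
  show "\<forall>q x. reachable (CC_eps_dssobs S QS) (q, x) \<and> q \<in> QS \<longrightarrow>
       x \<noteq> {} \<and>
       (\<forall>s' q' x'. run (Tr (CC_eps_dssobs S QS)) (q, x) s' (q', x') \<and>
          length (labw (Lab (CC_eps_dssobs S QS)) s') \<le> K \<longrightarrow> x' \<noteq> {})"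
  proof (intro allI impI, elim conjE)
    fix q x assume re: "reachable (CC_eps_dssobs S QS) (q, x)" and qS: "q \<in> QS"
    from re reach_iff[OF assms(1)] obtain q0 s1 where q0: "q0 \<in> Init S" "run (Tr S) q0 s1 q"
      "x = Rch S QS (labw (Lab S) s1)" by blast
    have main: "x' \<noteq> {}" if r: "run (Tr (CC_eps_dssobs S QS)) (q, x) s' (q', x')"
      and len: "length (labw (Lab (CC_eps_dssobs S QS)) s') \<le> K" for s' q' x'
    proof -
      have sx: "snd (q, x) = Rch S QS (labw (Lab S) s1)" using q0(3) by simp
      from lemA[OF r sx] obtain s2 where
        s2: "run (Tr S) q s2 q'" "labw (Lab S) s2 = labw (Lab (CC_eps_dssobs S QS)) s'"
        "x' = Rch S QS (labw (Lab S) s1 @ labw (Lab S) s2)" by auto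
      have len2: "length (labw (Lab S) s2) \<le> K" using s2(2) len by simp
      have "\<exists>q0' s1' q1' s2' q2'. q0' \<in> Init S \<and> avoid_run (Tr S) QS q0' s1' q1' \<and>
          avoid_run (Tr S) QS q1' s2' q2' \<and>
          labw (Lab S) s1 = labw (Lab S) s1' \<and> labw (Lab S) s2 = labw (Lab S) s2'"
        using op q0(1,2) qS s2(1) len2 unfolding strongly_K_step_opaque_def by blast
      then obtain q0' s1' q1' s2' q2' where
        o: "q0' \<in> Init S" "avoid_run (Tr S) QS q0' s1' q1'" "avoid_run (Tr S) QS q1' s2' q2'"
        "labw (Lab S) s1 = labw (Lab S) s1'" "labw (Lab S) s2 = labw (Lab S) s2'"
        by blast
      have ar: "avoid_run (Tr S) QS q0' (s1' @ s2') q2'" using o(2,3) by (rule avoid_append)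
      have "labw (Lab S) (s1' @ s2') = labw (Lab S) s1 @ labw (Lab S) s2" using o(4,5) by simp
      then have "q2' \<in> Rch S QS (labw (Lab S) s1 @ labw (Lab S) s2)" unfolding Rch_iff using o(1) ar by blast
      then show ?thesis using s2(3) by blast
    qed
    have "run (Tr (CC_eps_dssobs S QS)) (q, x) [] (q, x)" by (rule run.intros(1))
    then have "x \<noteq> {}" using main[of "[]" q x] by simp
    then show "x \<noteq> {} \<and>
       (\<forall>s' q' x'. run (Tr (CC_eps_dssobs S QS)) (q, x) s' (q', x') \<and>
          length (labw (Lab (CC_eps_dssobs S QS)) s') \<le> K \<longrightarrow> x' \<noteq> {})"
      using main by blast
  qed
next
  assume c: "\<forall>q x. reachable (CC_eps_dssobs S QS) (q, x) \<and> q \<in> QS \<longrightarrow>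
       x \<noteq> {} \<and>
       (\<forall>s' q' x'. run (Tr (CC_eps_dssobs S QS)) (q, x) s' (q', x') \<and>
          length (labw (Lab (CC_eps_dssobs S QS)) s') \<le> K \<longrightarrow> x' \<noteq> {})"
  show "strongly_K_step_opaque S QS K"
    unfolding strongly_K_step_opaque_def
  proof (intro allI impI, elim conjE)
    fix q0 s1 q1 s2 q2
    assume h: "q0 \<in> Init S" "run (Tr S) q0 s1 q1" "q1 \<in> QS" "run (Tr S) q1 s2 q2"
      "length (labw (Lab S) s2) \<le> K"
    define w where "w = labw (Lab S) s1"
    have "\<exists>q0\<in>Init S. \<exists>s. run (Tr S) q0 s q1 \<and> Rch S QS w = Rch S QS (labw (Lab S) s)"
      using h(1,2) w_def by blast
    then have re: "reachable (CC_eps_dssobs S QS) (q1, Rch S QS w)"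
      using reach_iff[OF assms(1)] by blast
    from lemB[where QS=QS and w=w, OF h(4) assms(1)] obtain s'' where
      r: "run (Tr (CC_eps_dssobs S QS)) (q1, Rch S QS w) s'' (q2, Rch S QS (w @ labw (Lab S) s2))"
      and l: "labw (Lab (CC_eps_dssobs S QS)) s'' = labw (Lab S) s2" by blast
    have len: "length (labw (Lab (CC_eps_dssobs S QS)) s'') \<le> K" using l h(5) by simp
    have "Rch S QS (w @ labw (Lab S) s2) \<noteq> {}"
      using c re h(3) r len by blast
    then obtain q2' where "q2' \<in> Rch S QS (w @ labw (Lab S) s2)" by blast
    then obtain q0' s where a: "q0' \<in> Init S" "avoid_run (Tr S) QS q0' s q2'"
      "labw (Lab S) s = w @ labw (Lab S) s2" unfolding Rch_iff by blast
    from labw_split[OF a(3)] obtain s1' s2' where sp: "s = s1' @ s2'" "labw (Lab S) s1' = w"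
      "labw (Lab S) s2' = labw (Lab S) s2" by blast
    have "avoid_run (Tr S) QS q0' (s1' @ s2') q2'" using a(2) sp(1) by simp
    from avoid_split[OF this] obtain q1' where "avoid_run (Tr S) QS q0' s1' q1'" "avoid_run (Tr S) QS q1' s2' q2'"
      by blast
    then show "\<exists>q0' s1' q1' s2' q2'. q0' \<in> Init S \<and> avoid_run (Tr S) QS q0' s1' q1' \<and>
          avoid_run (Tr S) QS q1' s2' q2' \<and>
          labw (Lab S) s1 = labw (Lab S) s1' \<and> labw (Lab S) s2 = labw (Lab S) s2'"
      using a(1) sp(2,3) w_def by (intro exI[of _ q0'] exI[of _ s1'] exI[of _ q1'] exI[of _ s2'] exI[of _ q2']) simp
  qed
qed

end
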